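(* Let $\{x_i,v_i\}_{i\in[N]}$ be the global solution of the delayed Cucker–Smale system described in the context, let $\beta>0$ and \[ G(t):=d_v(t)+\beta\int_{\max\{0,t-2\tau\}}^t e^{-(t-s)}\int_s^t\max_{i\in[N]}|\dot v_i(r)|\,\mathrm dr\,\mathrm ds,\qquad t\ge0. \] Let $K$ be the smallest integer such that $K\sigma\ge2\tau$. Then \[ G(t)\le\mathcal{Z}^K_\sigma\Delta^0_v\qquad\text{for all }t\in[0,2\tau], \] where $\mathcal{Z}^K_\sigma:=Z^K_\sigma+Z^{K-1}_\sigma\beta\big(1-(1+2\tau)e^{-2\tau}\big)$.
   Context: Let $N\ge2$, $d\ge1$ be integers, $[N]=\{1,\dots,N\}$, $0\le\sigma\le\tau$. Let $\psi:[0,\infty)\to[0,\infty)$ be continuous, nonincreasing, positive everywhere, with $\sup\psi\le1$. Given $x_i^0\in C^1([-\tau,0],\mathbb{R}^d)$, $v_i^0\in C([-\tau,0],\mathbb{R}^d)$ with $\frac{\mathrm d}{\mathrm dt}x_i^0=v_i^0$, $\{x_i,v_i\}$ is the global solution of $\dot x_i(t)=v_i(t)$, $\dot v_i(t)=\sum_{j\ne i}a_{ij}(t)(v_j(t-\tau)-v_i(t-\sigma))$ for $t>0$, with $a_{ij}(t)=\frac1{N-1}\psi(|x_i(t-\sigma)-x_j(t-\tau)|)$, and $x_i=x_i^0$, $v_i=v_i^0$ on $[-\tau,0]$ ($v_i$ continuously differentiable on $[0,\infty)$). $d_v(t):=\max_{i,j}|v_i(t)-v_j(t)|$; $\Delta^0_v:=\max_{i,j}\max_{s,t\in[-\tau,0]}|v_i^0(s)-v_j^0(t)|$.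 For $k\ge0$, \[ Z^k_\sigma:=\frac{1}{2\sqrt{\sigma(1+\sigma)}}\Big[\big((1+\sigma)+\sqrt{\sigma(1+\sigma)}\big)^{k+1}-\big((1+\sigma)-\sqrt{\sigma(1+\sigma)}\big)^{k+1}\Big], \] a polynomial in $\sigma$; equivalently $Z^0_\sigma=1$, $Z^k_\sigma=1+(1+\sigma)Z^{k-1}_\sigma+\sigma\sum_{m=0}^{k-1}Z^m_\sigma$ for $k\ge1$. *)

theory Defs
  imports "HOL-Analysis.Analysis"
begin

text \<open>The numbers Z^k_sigma, via the recursion given in the paper
  (equivalent to the closed form, and well defined also for sigma = 0).\<close>
fun Zs :: "real \<Rightarrow> nat \<Rightarrow> real" where
  "Zs \<sigma> 0 = 1"
| "Zs \<sigma> (Suc k) = 1 + (1 + \<sigma>) * Zs \<sigma> k + \<sigma> * (\<Sum>m\<le>k. Zs \<sigma> m)"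

definition dv :: "nat \<Rightarrow> (nat \<Rightarrow> real \<Rightarrow> real^'d) \<Rightarrow> real \<Rightarrow> real" where
  "dv N v t = Max {norm (v i t - v j t) | i j. i \<in> {1..N} \<and> j \<in> {1..N}}"

definition Delta0 :: "nat \<Rightarrow> real \<Rightarrow> (nat \<Rightarrow> real \<Rightarrow> real^'d) \<Rightarrow> real" where
  "Delta0 N \<tau> v0 = Sup {norm (v0 i s - v0 j t) | i j s t.
      i \<in> {1..N} \<and> j \<in> {1..N} \<and> s \<in> {-\<tau>..0} \<and> t \<in> {-\<tau>..0}}"

definition aw :: "nat \<Rightarrow> (real \<Rightarrow> real) \<Rightarrow> real \<Rightarrow> real \<Rightarrow> (nat \<Rightarrow> real \<Rightarrow> real^'d)
    \<Rightarrow> nat \<Rightarrow> nat \<Rightarrow> real \<Rightarrow> real" where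
  "aw N \<psi> \<sigma> \<tau> x i j t = (1 / (real N - 1)) * \<psi> (norm (x i (t - \<sigma>) - x j (t - \<tau>)))"

definition maxacc :: "nat \<Rightarrow> (nat \<Rightarrow> real \<Rightarrow> real^'d) \<Rightarrow> real \<Rightarrow> real" where
  "maxacc N v r = Max ((\<lambda>i. norm (vector_derivative (v i) (at r within {0..}))) ` {1..N})"

definition Gf :: "nat \<Rightarrow> real \<Rightarrow> real \<Rightarrow> (nat \<Rightarrow> real \<Rightarrow> real^'d) \<Rightarrow> real \<Rightarrow> real" where
  "Gf N \<tau> \<beta> v t = dv N v t + \<beta> * integral {max 0 (t - 2*\<tau>)..t}
      (\<lambda>s. exp (-(t - s)) * integral {s..t} (\<lambda>r. maxacc N v r))"

end

theory Submission
  imports Defs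
begin

lemma Zs_ge1: "0 \<le> \<sigma> \<Longrightarrow> Zs \<sigma> k \<ge> 1"
proof (induction k rule: less_induct)
  case (less k)
  show ?case
  proof (cases k)
    case 0 then show ?thesis by simp
  next
    case (Suc n)
    have a: "(\<Sum>m\<le>n. Zs \<sigma> m) \<ge> 0" proof (intro sum_nonneg)
      fix x assume "x \<in> {..n}"
      then have "1 \<le> Zs \<sigma> x" using less Suc by auto
      then show "0 \<le> Zs \<sigma> x" by linarith
    qed
    have b: "Zs \<sigma> n \<ge> 1" using less Suc by auto
    show ?thesis using Suc a b less.prems
      by (simp add: add_nonneg_nonneg mult_nonneg_nonneg)
  qed
qed

lemma pow_le_Zs: "0 \<le> \<sigma> \<Longrightarrow> (1 + 2*\<sigma>)^k \<le> Zs \<sigma> k"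
proof (induction k)
  case 0 then show ?case by simp
next
  case (Suc k)
  have "Zs \<sigma> k \<le> (\<Sum>m\<le>k. Zs \<sigma> m)"
    using Zs_ge1[OF Suc.prems] by (intro member_le_sum) (auto intro: order_trans[OF zero_le_one])
  then have "\<sigma> * Zs \<sigma> k \<le> \<sigma> * (\<Sum>m\<le>k. Zs \<sigma> m)" using Suc.prems by (intro mult_left_mono) auto
  moreover have "(1+2*\<sigma>) * (1 + 2*\<sigma>)^k \<le> (1+2*\<sigma>) * Zs \<sigma> k" using Suc by (intro mult_left_mono) auto
  ultimately show ?case by (simp add: algebra_simps)
qed

lemma exp_int:
  fixes a t :: real assumes "a \<le> t"
  shows "((\<lambda>s. exp (-(t - s)) * (t - s)) has_integral (1 - (1 + (t - a)) * exp (-(t - a)))) {a..t}"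
proof -
  have "((\<lambda>s. exp (-(t - s)) * (t - s)) has_integral ((\<lambda>s. (1 + t - s) * exp (-(t - s))) t - (\<lambda>s. (1 + t - s) * exp (-(t - s))) a)) {a..t}"
  proof (rule fundamental_theorem_of_calculus[OF assms])
    fix x assume "x \<in> {a..t}"
    have "((\<lambda>s. (1 + t - s) * exp (-(t - s))) has_real_derivative exp (-(t - x)) * (t - x)) (at x)"
      by (auto intro!: derivative_eq_intros simp: algebra_simps)
    then show "((\<lambda>s. (1 + t - s) * exp (-(t - s))) has_vector_derivative exp (-(t - x)) * (t - x)) (at x within {a..t})"
      by (simp add: has_real_derivative_iff_has_vector_derivative has_vector_derivative_at_within)
  qed
  then show ?thesis by (simp add: algebra_simps)
qed




theorem lemma4p2:
  fixes N K :: nat and \<sigma> \<tau> \<beta> :: real and \<psi> :: "real \<Rightarrow> real"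
    and x0 v0 x v :: "nat \<Rightarrow> real \<Rightarrow> real^'d"
  assumes N: "N \<ge> 2"
    and sig: "0 \<le> \<sigma>" "\<sigma> \<le> \<tau>"
    and psi_cont: "continuous_on {0..} \<psi>"
    and psi_mono: "\<And>r s. 0 \<le> r \<Longrightarrow> r \<le> s \<Longrightarrow> \<psi> s \<le> \<psi> r"
    and psi_pos: "\<And>r. 0 \<le> r \<Longrightarrow> \<psi> r > 0"
    and psi_le1: "\<And>r. 0 \<le> r \<Longrightarrow> \<psi> r \<le> 1"
    and init_x: "\<And>i t. i \<in> {1..N} \<Longrightarrow> t \<in> {-\<tau>..0} \<Longrightarrow>
                   (x0 i has_vector_derivative v0 i t) (at t within {-\<tau>..0})"
    and init_v: "\<And>i. i \<in> {1..N} \<Longrightarrow> continuous_on {-\<tau>..0} (v0 i)"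
    and x_init: "\<And>i t. i \<in> {1..N} \<Longrightarrow> t \<in> {-\<tau>..0} \<Longrightarrow> x i t = x0 i t"
    and v_init: "\<And>i t. i \<in> {1..N} \<Longrightarrow> t \<in> {-\<tau>..0} \<Longrightarrow> v i t = v0 i t"
    and x_cont: "\<And>i. i \<in> {1..N} \<Longrightarrow> continuous_on {-\<tau>..} (x i)"
    and x_ode: "\<And>i t. i \<in> {1..N} \<Longrightarrow> t > 0 \<Longrightarrow> (x i has_vector_derivative v i t) (at t)"
    and v_ode: "\<And>i t. i \<in> {1..N} \<Longrightarrow> t > 0 \<Longrightarrow>
        (v i has_vector_derivative
           (\<Sum>j\<in>{1..N} - {i}. aw N \<psi> \<sigma> \<tau> x i j t *\<^sub>R (v j (t - \<tau>) - v i (t - \<sigma>)))) (at t)"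
    and v_C1: "\<And>i. i \<in> {1..N} \<Longrightarrow> \<exists>v'. continuous_on {0..} v' \<and>
        (\<forall>t\<ge>0. (v i has_vector_derivative v' t) (at t within {0..}))"
    and beta: "\<beta> > 0"
    and K: "real K * \<sigma> \<ge> 2 * \<tau>" "\<And>k. k < K \<Longrightarrow> real k * \<sigma> < 2 * \<tau>"
  shows "\<forall>t\<in>{0..2*\<tau>}. Gf N \<tau> \<beta> v t
           \<le> (Zs \<sigma> K + Zs \<sigma> (K - 1) * \<beta> * (1 - (1 + 2*\<tau>) * exp (-(2*\<tau>)))) * Delta0 N \<tau> v0"
  
proof -
  have tau0: "0 \<le> \<tau>" using sig by linarith
  have one: "1 \<in> {1..N}" using N by auto
  define \<Delta> where "\<Delta> = Delta0 N \<tau> v0"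
  define S where "S = {norm (v0 i s - v0 j t) | i j s t.
      i \<in> {1..N} \<and> j \<in> {1..N} \<and> s \<in> {-\<tau>..0} \<and> t \<in> {-\<tau>..0}}"
  have "\<exists>B. \<forall>s\<in>{-\<tau>..0}. norm (v0 i s) \<le> B" if "i \<in> {1..N}" for i
  proof -
    have "compact (v0 i ` {-\<tau>..0})" by (rule compact_continuous_image[OF init_v[OF that]]) simp
    then obtain B where "\<forall>y\<in>v0 i ` {-\<tau>..0}. norm y \<le> B"
      using compact_imp_bounded bounded_iff by metis
    then show ?thesis by auto
  qed
  then obtain Bf where Bf: "\<And>i s. i \<in> {1..N} \<Longrightarrow> s \<in> {-\<tau>..0} \<Longrightarrow> norm (v0 i s) \<le> Bf i"
    by metis
  define BB where "BB = (\<Sum>i\<in>{1..N}. \<bar>Bf i\<bar>)"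
  have BB: "norm (v0 i s) \<le> BB" if "i \<in> {1..N}" "s \<in> {-\<tau>..0}" for i s
  proof -
    have "Bf i \<le> \<bar>Bf i\<bar>" by simp
    also have "\<bar>Bf i\<bar> \<le> BB" unfolding BB_def using that by (intro member_le_sum) auto
    finally show ?thesis using Bf[OF that] by linarith
  qed
  have bdd: "bdd_above S"
  unfolding bdd_above_def proof (intro exI[of _ "2*BB"] ballI)
    fix y assume "y \<in> S"
    then obtain i j s r where y: "y = norm (v0 i s - v0 j r)" "i \<in> {1..N}" "j \<in> {1..N}"
      "s \<in> {-\<tau>..0}" "r \<in> {-\<tau>..0}" unfolding S_def by blast
    have "y \<le> norm (v0 i s) + norm (v0 j r)" using y(1) norm_triangle_ineq4 by blast
    then show "y \<le> 2*BB" using BB[OF y(2,4)] BB[OF y(3,5)] by linarith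
  qed
  have P0: "norm (v i s - v j r) \<le> \<Delta>" if "i \<in> {1..N}" "j \<in> {1..N}" "s \<in> {-\<tau>..0}" "r \<in> {-\<tau>..0}" for i j s r
  proof -
    have "norm (v0 i s - v0 j r) \<in> S" unfolding S_def using that by blast
    then have "norm (v0 i s - v0 j r) \<le> Sup S" using bdd by (rule cSup_upper)
    then show ?thesis using that v_init unfolding \<Delta>_def Delta0_def S_def by simp
  qed
  have D0: "0 \<le> \<Delta>" using P0[OF one one, of 0 0] tau0 by simp
  have vcont: "continuous_on {0..} (v i)" if ii: "i \<in> {1..N}" for i
  proof -
    obtain v' where "\<forall>t\<ge>0. (v i has_vector_derivative v' t) (at t within {0..})" using v_C1[OF ii] by blast
    then show ?thesis by (intro continuous_on_vector_derivative) auto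
  qed
  define F where "F i r = (\<Sum>j\<in>{1..N} - {i}. aw N \<psi> \<sigma> \<tau> x i j r *\<^sub>R (v j (r - \<tau>) - v i (r - \<sigma>)))" for i r
  have accb: "norm (F i r) \<le> B" if i: "i \<in> {1..N}" and r: "0 < r" "r \<le> real k * \<sigma> + \<sigma>" and B: "0 \<le> B"
    and P: "\<And>i j s r. i \<in> {1..N} \<Longrightarrow> j \<in> {1..N} \<Longrightarrow> s \<in> {-\<tau>..real k * \<sigma>} \<Longrightarrow> r \<in> {-\<tau>..real k * \<sigma>}
        \<Longrightarrow> norm (v i s - v j r) \<le> B" for i r k B
  proof -
    have "norm (F i r) \<le> (\<Sum>j\<in>{1..N} - {i}. norm (aw N \<psi> \<sigma> \<tau> x i j r *\<^sub>R (v j (r - \<tau>) - v i (r - \<sigma>))))"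
      unfolding F_def by (rule norm_sum)
    also have "\<dots> \<le> (\<Sum>j\<in>{1..N} - {i}. (1 / (real N - 1)) * B)"
    proof (rule sum_mono)
      fix j assume j: "j \<in> {1..N} - {i}"
      have Nn: "0 \<le> 1 / (real N - 1)" using N by simp
      have a0: "0 \<le> aw N \<psi> \<sigma> \<tau> x i j r" "aw N \<psi> \<sigma> \<tau> x i j r \<le> 1 / (real N - 1)"
        unfolding aw_def using psi_pos[of "norm (x i (r - \<sigma>) - x j (r - \<tau>))"]
          psi_le1[of "norm (x i (r - \<sigma>) - x j (r - \<tau>))"] N
        by (auto simp: divide_simps)
      have "norm (v j (r - \<tau>) - v i (r - \<sigma>)) \<le> B"
        using P[of j i "r - \<tau>" "r - \<sigma>"] j i r sig
        by (auto simp: algebra_simps)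
      then show "norm (aw N \<psi> \<sigma> \<tau> x i j r *\<^sub>R (v j (r - \<tau>) - v i (r - \<sigma>))) \<le> (1 / (real N - 1)) * B"
      proof -
        have "aw N \<psi> \<sigma> \<tau> x i j r * norm (v j (r - \<tau>) - v i (r - \<sigma>)) \<le> (1 / (real N - 1)) * B"
          using a0 \<open>norm (v j (r - \<tau>) - v i (r - \<sigma>)) \<le> B\<close> B Nn by (intro mult_mono) auto
        then show ?thesis using a0 by simp
      qed
    qed
    also have "\<dots> = B"
    proof -
      have "card ({1..N} - {i}) = N - 1" using i by simp
      then have "real (card ({1..N} - {i})) = real N - 1" using N by simp
      then show ?thesis using N by simp
    qed
    finally show ?thesis .
  qed
  have mvt: "norm (v i s - v i (real k * \<sigma>)) \<le> \<sigma> * B" if i: "i \<in> {1..N}"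
    and s: "real k * \<sigma> \<le> s" "s \<le> real k * \<sigma> + \<sigma>" and B: "0 \<le> B"
    and P: "\<And>i j s r. i \<in> {1..N} \<Longrightarrow> j \<in> {1..N} \<Longrightarrow> s \<in> {-\<tau>..real k * \<sigma>} \<Longrightarrow> r \<in> {-\<tau>..real k * \<sigma>}
        \<Longrightarrow> norm (v i s - v j r) \<le> B" for i s k B
  proof (cases "s = real k * \<sigma>")
    case True then show ?thesis using B sig by simp
  next
    case False
    then have lt: "real k * \<sigma> < s" using s by simp
    have k0: "0 \<le> real k * \<sigma>" using sig by simp
    have "\<exists>y\<in>{real k * \<sigma><..<s}. norm (v i s - v i (real k * \<sigma>)) \<le> norm ((s - real k * \<sigma>) *\<^sub>R F i y)"
    proof (rule mvt_general[OF lt])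
      show "continuous_on {real k * \<sigma>..s} (v i)"
        using vcont[OF i] by (rule continuous_on_subset) (use k0 in auto)
      fix y assume "real k * \<sigma> < y" "y < s"
      then have "0 < y" using k0 by linarith
      then show "(v i has_derivative (\<lambda>h. h *\<^sub>R F i y)) (at y)"
        using v_ode[OF i] unfolding F_def has_vector_derivative_def by blast
    qed
    then obtain y where y: "real k * \<sigma> < y" "y < s"
      and le: "norm (v i s - v i (real k * \<sigma>)) \<le> norm ((s - real k * \<sigma>) *\<^sub>R F i y)" by auto
    have "norm (F i y) \<le> B" using accb[OF i, of y k B] y s k0 B P by auto
    then have "(s - real k * \<sigma>) * norm (F i y) \<le> \<sigma> * B"
      using s lt B sig by (intro mult_mono) auto
    then show ?thesis using le lt by simp
  qed
  have Pk: "norm (v i s - v j r) \<le> (1 + 2*\<sigma>)^k * \<Delta>"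
    if "i \<in> {1..N}" "j \<in> {1..N}" "s \<in> {-\<tau>..real k * \<sigma>}" "r \<in> {-\<tau>..real k * \<sigma>}" for k i j s r
    using that
  proof (induction k arbitrary: i j s r)
    case 0
    then show ?case using P0 by simp
  next
    case (Suc k)
    let ?B = "(1 + 2*\<sigma>)^k * \<Delta>"
    have B0: "0 \<le> ?B" using D0 sig by simp
    have k0: "0 \<le> real k * \<sigma>" using sig by simp
    have cl: "norm (v i s - v i (min s (real k * \<sigma>))) \<le> \<sigma> * ?B"
      if "i \<in> {1..N}" "s \<in> {-\<tau>..real (Suc k) * \<sigma>}" for i s
    proof (cases "s \<le> real k * \<sigma>")
      case True then show ?thesis using B0 sig by simp
    next
      case False
      then show ?thesis using mvt[OF that(1), of k s ?B] Suc.IH that B0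
        by (auto simp: algebra_simps)
    qed
    have m1: "min s (real k * \<sigma>) \<in> {-\<tau>..real k * \<sigma>}" "min r (real k * \<sigma>) \<in> {-\<tau>..real k * \<sigma>}"
      using Suc.prems k0 tau0 by auto
    have "norm (v i s - v j r) \<le> norm (v i s - v i (min s (real k * \<sigma>)))
        + norm (v i (min s (real k * \<sigma>)) - v j (min r (real k * \<sigma>)))
        + norm (v j (min r (real k * \<sigma>)) - v j r)"
    proof -
      let ?a = "v i s" and ?b = "v i (min s (real k * \<sigma>))" and ?c = "v j (min r (real k * \<sigma>))" and ?d = "v j r"
      have "?a - ?d = (?a - ?b) + (?b - ?c) + (?c - ?d)" by simp
      then have "norm (?a - ?d) \<le> norm ((?a - ?b) + (?b - ?c)) + norm (?c - ?d)"
        by (metis norm_triangle_ineq)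
      also have "\<dots> \<le> norm (?a - ?b) + norm (?b - ?c) + norm (?c - ?d)"
        using norm_triangle_ineq[of "?a - ?b" "?b - ?c"] by simp
      finally show ?thesis .
    qed
    also have "\<dots> \<le> \<sigma> * ?B + ?B + \<sigma> * ?B"
      using cl[OF Suc.prems(1,3)] cl[OF Suc.prems(2,4)] Suc.IH[OF Suc.prems(1,2) m1]
        norm_minus_commute[of "v j r" "v j (min r (real k * \<sigma>))"]
      by linarith
    also have "\<dots> = (1 + 2*\<sigma>)^Suc k * \<Delta>" by (simp add: algebra_simps)
    finally show ?case .
  qed
  have cnn: "0 \<le> 1 - (1 + 2*\<tau>) * exp (-(2*\<tau>))"
  proof -
    have "(1 + 2*\<tau>) * exp (-(2*\<tau>)) \<le> exp (2*\<tau>) * exp (-(2*\<tau>))"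
      by (intro mult_right_mono) auto
    also have "\<dots> = 1" by (simp add: exp_minus field_simps)
    finally show ?thesis by simp
  qed
  show ?thesis
  proof
    fix t assume t: "t \<in> {0..2*\<tau>}"
    have dvb: "dv N v t \<le> Zs \<sigma> K * \<Delta>"
    proof -
      have eq: "{norm (v i t - v j t) | i j. i \<in> {1..N} \<and> j \<in> {1..N}}
          = (\<lambda>(i,j). norm (v i t - v j t)) ` ({1..N} \<times> {1..N})"
        by (auto simp: image_iff) blast
      have "dv N v t \<le> (1 + 2*\<sigma>)^K * \<Delta>"
      proof -
        have tK: "t \<in> {-\<tau>..real K * \<sigma>}" using t K(1) tau0 by auto
        have all: "\<forall>y\<in>(\<lambda>(i,j). norm (v i t - v j t)) ` ({1..N} \<times> {1..N}). y \<le> (1 + 2*\<sigma>)^K * \<Delta>"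
          using Pk[OF _ _ tK tK] by auto
        have ne: "(\<lambda>(i,j). norm (v i t - v j t)) ` ({1..N} \<times> {1..N}) \<noteq> {}" using one by auto
        show ?thesis unfolding dv_def eq using Max_le_iff[OF _ ne] all by simp
      qed
      also have "\<dots> \<le> Zs \<sigma> K * \<Delta>" using pow_le_Zs[OF sig(1)] D0 by (intro mult_right_mono) auto
      finally show ?thesis .
    qed
    show "Gf N \<tau> \<beta> v t \<le> (Zs \<sigma> K + Zs \<sigma> (K - 1) * \<beta> * (1 - (1 + 2*\<tau>) * exp (-(2*\<tau>)))) * Delta0 N \<tau> v0"
    proof (cases "\<tau> = 0")
      case True
      then have "t = 0" using t by simp
      then show ?thesis using True dvb unfolding Gf_def \<Delta>_def by simp
    next
      case False
      then have tp: "0 < \<tau>" using tau0 by simp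
      have K1: "K \<ge> 1" using K(1) tp by (cases K) auto
      have sp: "0 < \<sigma>" using K(1) tp sig(1) by (cases "\<sigma> = 0") auto
      define C where "C = Zs \<sigma> (K - 1) * \<Delta>"
      have C0: "0 \<le> C" unfolding C_def using Zs_ge1[OF sig(1), of "K-1"] D0 by simp
      have Kk: "real K * \<sigma> = real (K - 1) * \<sigma> + \<sigma>" using K1 by (simp add: of_nat_diff algebra_simps)
      have Fb: "norm (F i r) \<le> C" if "i \<in> {1..N}" "0 < r" "r \<le> 2*\<tau>" for i r
      proof -
        have "norm (F i r) \<le> (1 + 2*\<sigma>)^(K-1) * \<Delta>"
        proof (rule accb[OF that(1,2), of "K - 1"])
          show "r \<le> real (K - 1) * \<sigma> + \<sigma>" using that K(1) Kk by linarith
          show "0 \<le> (1 + 2*\<sigma>)^(K-1) * \<Delta>" using D0 sig by simp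
          fix i j s r' assume "i \<in> {1..N}" "j \<in> {1..N}" "s \<in> {-\<tau>..real (K - 1) * \<sigma>}" "r' \<in> {-\<tau>..real (K - 1) * \<sigma>}"
          then show "norm (v i s - v j r') \<le> (1 + 2*\<sigma>)^(K-1) * \<Delta>" by (rule Pk)
        qed
        also have "\<dots> \<le> C" unfolding C_def using pow_le_Zs[OF sig(1)] D0 by (intro mult_right_mono) auto
        finally show ?thesis .
      qed
      have nb: "at r within {0..} \<noteq> bot" if "0 \<le> r" for r :: real
      proof
        assume "at r within {0..} = bot"
        moreover have "at_right r \<le> at r within {0..}" by (rule at_le) (use that in auto)
        ultimately show False using trivial_limit_at_right_real[of r] bot_unique by metis
      qed
      have accC: "maxacc N v r \<le> C" if r: "r \<in> {0..2*\<tau>}" for r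
      proof -
        have "norm (vector_derivative (v i) (at r within {0..})) \<le> C" if i: "i \<in> {1..N}" for i
        proof -
          obtain v' where v': "continuous_on {0..} v'" "\<forall>t\<ge>0. (v i has_vector_derivative v' t) (at t within {0..})"
            using v_C1[OF i] by blast
          have vd: "vector_derivative (v i) (at y within {0..}) = v' y" if "0 \<le> y" for y
            using vector_derivative_within[OF nb[OF that]] v'(2) that by blast
          have vF: "v' y = F i y" if "0 < y" for y
          proof -
            have "(v i has_vector_derivative F i y) (at y within {0..})"
              using v_ode[OF i that] unfolding F_def by (rule has_vector_derivative_at_within)
            have y0: "0 \<le> y" using that by simp
            have "vector_derivative (v i) (at y within {0..}) = F i y"
              by (rule vector_derivative_within[OF nb[OF y0]]) fact
            then show ?thesis using vd[of y] that by simp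
          qed
          have "norm (v' r) \<le> C"
          proof (cases "r = 0")
            case False
            then show ?thesis using vF[of r] Fb[OF i, of r] r by auto
          next
            case True
            have "(v' \<longlongrightarrow> v' 0) (at 0 within {0..})"
              using v'(1) by (auto simp: continuous_on_def)
            then have lim: "(v' \<longlongrightarrow> v' 0) (at_right 0)" by (rule tendsto_within_subset) auto
            have ev: "eventually (\<lambda>y. norm (v' y) \<le> C) (at_right (0::real))"
            proof -
              have "eventually (\<lambda>y. 0 < y \<and> y < 2*\<tau>) (at_right (0::real))"
                using tp by (subst eventually_at_right[of _ "2*\<tau>"]) auto
              then show ?thesis
                by eventually_elim (use vF Fb[OF i] in auto)
            qed
            show ?thesis using Lim_norm_ubound[OF trivial_limit_at_right_real lim ev] True by simp
          qed
          then show ?thesis using vd r by auto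
        qed
        then show ?thesis unfolding maxacc_def using one by (subst Max_le_iff) auto
      qed
      define a where "a = max 0 (t - 2*\<tau>)"
      have at: "a \<le> t" "0 \<le> a" "t - 2*\<tau> \<le> a" using t unfolding a_def by auto
      have inner: "integral {s..t} (maxacc N v) \<le> C * (t - s)" if s: "s \<in> {a..t}" for s
      proof (cases "maxacc N v integrable_on {s..t}")
        case True
        have "integral {s..t} (maxacc N v) \<le> integral {s..t} (\<lambda>_. C)"
          by (rule integral_le[OF True]) (use accC at s t in auto)
        then show ?thesis using s by (simp add: content_real mult.commute)
      next
        case False
        then show ?thesis using C0 s by (simp add: not_integrable_integral)
      qed
      have outer: "integral {a..t} (\<lambda>s. exp (-(t - s)) * integral {s..t} (maxacc N v))
          \<le> C * (1 - (1 + 2*\<tau>) * exp (-(2*\<tau>)))"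
      proof (cases "(\<lambda>s. exp (-(t - s)) * integral {s..t} (maxacc N v)) integrable_on {a..t}")
        case True
        have I1: "((\<lambda>s. exp (-(t - s)) * (t - s)) has_integral (1 - (1 + (t - a)) * exp (-(t - a)))) {a..t}"
          using exp_int[OF at(1)] .
        have I2: "((\<lambda>s. exp (-(t - s)) * (t - s)) has_integral (1 - (1 + 2*\<tau>) * exp (-(2*\<tau>)))) {t - 2*\<tau>..t}"
          using exp_int[of "t - 2*\<tau>" t] tp by simp
        have "integral {a..t} (\<lambda>s. exp (-(t - s)) * integral {s..t} (maxacc N v))
            \<le> integral {a..t} (\<lambda>s. C * (exp (-(t - s)) * (t - s)))"
        proof (rule integral_le[OF True])
          show "(\<lambda>s. C * (exp (-(t - s)) * (t - s))) integrable_on {a..t}"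
            by (rule has_integral_integrable[OF has_integral_mult_right[OF I1]])
          fix s assume "s \<in> {a..t}"
          then show "exp (-(t - s)) * integral {s..t} (maxacc N v) \<le> C * (exp (-(t - s)) * (t - s))"
          proof -
            have "exp (-(t - s)) * integral {s..t} (maxacc N v) \<le> exp (-(t - s)) * (C * (t - s))"
              using inner[OF \<open>s \<in> {a..t}\<close>] by (intro mult_left_mono) auto
            then show ?thesis by (simp add: algebra_simps)
          qed
        qed
        also have "\<dots> = C * integral {a..t} (\<lambda>s. exp (-(t - s)) * (t - s))" by simp
        also have "\<dots> \<le> C * integral {t - 2*\<tau>..t} (\<lambda>s. exp (-(t - s)) * (t - s))"
          using C0 I1 I2 at by (intro mult_left_mono integral_subset_le) auto
        also have "\<dots> = C * (1 - (1 + 2*\<tau>) * exp (-(2*\<tau>)))" using I2 by (simp add: integral_unique)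
        finally show ?thesis .
      next
        case False
        then show ?thesis using C0 cnn by (simp add: not_integrable_integral)
      qed
      have "Gf N \<tau> \<beta> v t \<le> Zs \<sigma> K * \<Delta> + \<beta> * (C * (1 - (1 + 2*\<tau>) * exp (-(2*\<tau>))))"
        unfolding Gf_def using dvb outer beta a_def by (intro add_mono mult_left_mono) auto
      then show ?thesis unfolding C_def \<Delta>_def by (simp add: algebra_simps)
    qed
  qed
qed

end
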